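(* Let $(p_n)_{n\ge1}$ be a sequence in $[0,1]$ with $p_n \gg \frac{1}{n^3}$, i.e. $\lim_{n\to\infty} n^3 p_n = \infty$. Let $G_n$ be the Erdős–Rényi random graph on the vertex set $\mathcal C^0_n$ (with $N_n=|\mathcal C^0_n|$ vertices) with edge probability $p_n$, and let $R_n$ be the reaction network associated to $G_n$. Then \[ \lim_{n\to\infty}\mathbb P(\delta_{R_n}=0)=0 . \]
   Context: A reaction network on species $S_1,\dots,S_n$ consists of a finite set $\mathcal R$ of reactions $y\to y'$ where $y\neq y'$ are complexes, i.e. vectors in $\mathbb Z^n_{\ge0}$; $\mathcal C$ is the set of complexes appearing in some reaction. Its graph has vertex set $\mathcal C$ and a directed edge $y\to y'$ for each reaction; $\ell$ denotes the number of connected components of this graph (ignoring edge directions), $s=\dim\operatorname{span}\{y'-y: y\to y'\in\mathcal R\}$, and the deficiency is $\delta=|\mathcal C|-\ell-s$ (the empty network, with no reactions, has $\delta=0$). Let $e_i$ be the $i$-th standard basis vector of $\mathbb Z^n$ and $\mathcal C^0_n=\{0\}\cup\{e_i:1\le i\le n\}\cup\{e_i+e_j:1\le i\le j\le n\}$, so $N_n=|\mathcal C^0_n|=\frac{n^2+3n+2}{2}$. $G_n$ is the Erdős–Rényi random graph on vertex set $\mathcal C^0_n$ in which each of the $\binom{N_n}{2}$ possible undirected edges is present independently with probability $p_n$. The associated reaction network $R_n$ has species $S_1,\dots,S_n$, complex set equal to the set of vertices of $G_n$ of positive degree, and for each edge $\{y,y'\}$ of $G_n$ the two reactions $y\to y'$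 and $y'\to y$. $\delta_{R_n}$ denotes the deficiency of $R_n$. *)

theory Defs
  imports Complex_Main "HOL-Library.Function_Algebras"
begin

text \<open>Complexes are vectors in Z^n_{>=0}, represented as functions nat => nat with
  support in {0..<n} (coordinate i stands for species S_(i+1)).\<close>
type_synonym complex_vec = "nat \<Rightarrow> nat"

text \<open>The complex set C^0_n: 0, e_i, and e_i + e_j (i <= j), i.e. all vectors
  supported on the first n coordinates with total degree at most 2.\<close>
definition C0 :: "nat \<Rightarrow> complex_vec set" where
  "C0 n = {y. (\<forall>i\<ge>n. y i = 0) \<and> (\<Sum>i<n. y i) \<le> 2}"

definition possible_edges :: "nat \<Rightarrow> complex_vec set set" where
  "possible_edges n = {{x, y} | x y. x \<in> C0 n \<and> y \<in> C0 n \<and> x \<noteq> y}"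

definition net_complexes :: "complex_vec set set \<Rightarrow> complex_vec set" where
  "net_complexes E = \<Union>E"

definition net_reactions :: "complex_vec set set \<Rightarrow> (complex_vec \<times> complex_vec) set" where
  "net_reactions E = {(y, y'). {y, y'} \<in> E \<and> y \<noteq> y'}"

definition net_linkage_classes :: "complex_vec set set \<Rightarrow> nat" where
  "net_linkage_classes E =
     card (net_complexes E // ((net_reactions E \<union> (net_reactions E)\<inverse>)\<^sup>*))"

definition reaction_vector :: "complex_vec \<Rightarrow> complex_vec \<Rightarrow> (nat \<Rightarrow> real)" where
  "reaction_vector y y' = (\<lambda>i. real (y' i) - real (y i))"

definition fscale :: "real \<Rightarrow> (nat \<Rightarrow> real) \<Rightarrow> (nat \<Rightarrow> real)" where
  "fscale c v = (\<lambda>i. c * v i)"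

definition net_stoich_dim :: "complex_vec set set \<Rightarrow> nat" where
  "net_stoich_dim E =
     vector_space.dim fscale {reaction_vector y y' | y y'. (y, y') \<in> net_reactions E}"

definition deficiency :: "complex_vec set set \<Rightarrow> int" where
  "deficiency E = int (card (net_complexes E)) - int (net_linkage_classes E) - int (net_stoich_dim E)"

definition er_prob :: "nat \<Rightarrow> real \<Rightarrow> complex_vec set set \<Rightarrow> real" where
  "er_prob n p E = p ^ card E * (1 - p) ^ (card (possible_edges n) - card E)"

definition prob_deficiency_zero :: "nat \<Rightarrow> real \<Rightarrow> real" where
  "prob_deficiency_zero n p =
     (\<Sum>E\<in>Pow (possible_edges n). if deficiency E = 0 then er_prob n p E else 0)"

end

theory Submission
  imports Defs "HOL-Library.FuncSet"
begin


interpretation fs: vector_space fscale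
  by unfold_locales (auto simp: fscale_def fun_eq_iff algebra_simps)

lemma sum_fun_apply: "finite A \<Longrightarrow> (\<Sum>a\<in>A. f a) x = (\<Sum>a\<in>A. f a x)" for f :: "'a \<Rightarrow> 'b \<Rightarrow> 'c::comm_monoid_add"
  by (induction A rule: finite_induct) auto

definition unitv :: "nat \<Rightarrow> nat \<Rightarrow> real" where "unitv i = (\<lambda>k. if k = i then 1 else 0)"

lemma in_span_units:
  assumes "\<forall>i\<ge>n. f i = 0"
  shows "f \<in> fs.span (unitv ` {..<n})"
proof -
  have "f = (\<Sum>i<n. fscale (f i) (unitv i))"
  proof
    fix k
    show "f k = (\<Sum>i<n. fscale (f i) (unitv i)) k"
    proof -
      have "(\<Sum>i<n. fscale (f i) (unitv i)) k = (\<Sum>i<n. if k = i then f i else 0)"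
        by (simp add: sum_fun_apply fscale_def unitv_def if_distrib cong: if_cong)
      also have "\<dots> = f k" using assms by (cases "k < n") auto
      finally show ?thesis by simp
    qed
  qed
  also have "\<dots> \<in> fs.span (unitv ` {..<n})"
    by (intro fs.span_sum fs.span_scale fs.span_base) auto
  finally show ?thesis .
qed

lemma dim_le_n:
  assumes "\<forall>v\<in>S. \<forall>i\<ge>n. v i = 0"
  shows "fs.dim S \<le> n"
proof -
  have "fs.dim S \<le> card (unitv ` {..<n})"
    by (rule fs.dim_le_card) (use assms in_span_units in auto)
  also have "\<dots> \<le> n" using card_image_le[of "{..<n}" unitv] by simp
  finally show ?thesis .
qed

lemma finite_C0: "finite (C0 n)"
proof -
  have "C0 n \<subseteq> (\<lambda>g i. if i < n then g i else 0) ` ({0..<n} \<rightarrow>\<^sub>E {0..2::nat})"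
  proof
    fix y assume y: "y \<in> C0 n"
    have le: "y i \<le> 2" if "i < n" for i
    proof -
      have "y i \<le> (\<Sum>i<n. y i)" using that by (intro member_le_sum) auto
      thus ?thesis using y by (auto simp: C0_def)
    qed
    let ?g = "restrict y {0..<n}"
    have "y = (\<lambda>i. if i < n then ?g i else 0)" using y by (auto simp: C0_def fun_eq_iff)
    moreover have "?g \<in> {0..<n} \<rightarrow>\<^sub>E {0..2}" using le by auto
    ultimately show "y \<in> (\<lambda>g i. if i < n then g i else 0) ` ({0..<n} \<rightarrow>\<^sub>E {0..2::nat})" by blast
  qed
  moreover have "finite ({0..<n} \<rightarrow>\<^sub>E {0..2::nat})" by (intro finite_PiE) auto
  ultimately show ?thesis using finite_subset by blast
qed

lemma finite_pe: "finite (possible_edges n)"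
proof -
  have "possible_edges n \<subseteq> Pow (C0 n)" by (auto simp: possible_edges_def)
  thus ?thesis using finite_C0 finite_subset by blast
qed

lemma stoich_le:
  assumes "E \<subseteq> possible_edges n"
  shows "net_stoich_dim E \<le> n"
  unfolding net_stoich_dim_def
proof (rule dim_le_n, safe)
  fix y y' i assume r: "(y, y') \<in> net_reactions E" and i: "n \<le> i"
  then have "{y,y'} \<in> possible_edges n" using assms by (auto simp: net_reactions_def)
  then have "y \<in> C0 n" "y' \<in> C0 n" by (auto simp: possible_edges_def doubleton_eq_iff)
  thus "reaction_vector y y' i = 0" using i by (auto simp: C0_def reaction_vector_def)
qed


lemma lc_bound:
  assumes E: "E \<subseteq> possible_edges n" and AB: "A \<inter> B = {}"
  shows "net_linkage_classes E + card {b\<in>B. \<exists>a\<in>A. {a,b} \<in> E} \<le> card (net_complexes E)"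
proof -
  let ?T = "{b\<in>B. \<exists>a\<in>A. {a,b} \<in> E}"
  let ?C = "net_complexes E"
  let ?r = "net_reactions E"
  let ?R = "(?r \<union> ?r\<inverse>)\<^sup>*"
  have finE: "finite E" using E finite_pe finite_subset by blast
  have finC: "finite ?C" unfolding net_complexes_def
  proof (rule finite_Union[OF finE])
    fix e assume "e \<in> E"
    then have "e \<in> possible_edges n" using E by blast
    thus "finite e" by (auto simp: possible_edges_def)
  qed
  have TC: "?T \<subseteq> ?C" by (auto simp: net_complexes_def)
  have eqv: "equiv UNIV ?R"
    unfolding equiv_def refl_on_def
    by (auto simp: sym_rtrancl sym_Un_converse intro: trans_rtrancl)
  have sub: "?C // ?R \<subseteq> (\<lambda>x. ?R``{x}) ` (?C - ?T)"
  proof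
    fix X assume "X \<in> ?C // ?R"
    then obtain x where x: "x \<in> ?C" "X = ?R``{x}" by (auto simp: quotient_def)
    show "X \<in> (\<lambda>x. ?R``{x}) ` (?C - ?T)"
    proof (cases "x \<in> ?T")
      case False thus ?thesis using x by blast
    next
      case True
      then obtain a where a: "a \<in> A" "{a,x} \<in> E" "x \<in> B" by blast
      have "a \<noteq> x" using a AB by blast
      then have "(x,a) \<in> ?r" using a by (auto simp: net_reactions_def insert_commute)
      then have "(x,a) \<in> ?R" by blast
      then have "?R``{x} = ?R``{a}" using eqv by (simp add: equiv_class_eq)
      moreover have "a \<in> ?C - ?T" using a AB by (auto simp: net_complexes_def)
      ultimately show ?thesis using x by blast
    qed
  qed
  have "net_linkage_classes E \<le> card (?C - ?T)"
    unfolding net_linkage_classes_def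
  proof -
    have "card (?C // ?R) \<le> card ((\<lambda>x. ?R``{x}) ` (?C - ?T))"
      by (rule card_mono[OF _ sub]) (use finC in auto)
    also have "\<dots> \<le> card (?C - ?T)" by (rule card_image_le) (use finC in auto)
    finally show "card (?C // ?R) \<le> card (?C - ?T)" .
  qed
  also have "\<dots> = card ?C - card ?T" using TC finC by (simp add: card_Diff_subset finite_subset)
  finally show ?thesis using card_mono[OF finC TC] by linarith
qed

lemma def0_bound:
  assumes E: "E \<subseteq> possible_edges n" and AB: "A \<inter> B = {}" and d: "deficiency E = 0"
  shows "card {b\<in>B. \<exists>a\<in>A. {a,b} \<in> E} \<le> n"
  using lc_bound[OF E AB] stoich_le[OF E] d unfolding deficiency_def by linarith



definition w :: "'a set \<Rightarrow> real \<Rightarrow> 'a set \<Rightarrow> real" where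
  "w P p E = p ^ card E * (1 - p) ^ (card P - card E)"

lemma split_sum:
  assumes "finite P" "finite Q" "P \<inter> Q = {}"
  shows "(\<Sum>E\<in>Pow (P \<union> Q). F (E \<inter> P) (E \<inter> Q)) = (\<Sum>S\<in>Pow P. \<Sum>T\<in>Pow Q. F S T)"
proof -
  have img: "Pow (P \<union> Q) = (\<lambda>(S,T). S \<union> T) ` (Pow P \<times> Pow Q)"
  proof
    show "Pow (P \<union> Q) \<subseteq> (\<lambda>(S,T). S \<union> T) ` (Pow P \<times> Pow Q)"
    proof
      fix E assume "E \<in> Pow (P \<union> Q)"
      then have "E = (\<lambda>(S,T). S \<union> T) (E \<inter> P, E \<inter> Q)" by auto
      moreover have "(E \<inter> P, E \<inter> Q) \<in> Pow P \<times> Pow Q" by auto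
      ultimately show "E \<in> (\<lambda>(S,T). S \<union> T) ` (Pow P \<times> Pow Q)" by blast
    qed
  qed auto
  have inj: "inj_on (\<lambda>(S,T). S \<union> T) (Pow P \<times> Pow Q)"
  proof (rule inj_onI)
    fix x y assume hx: "x \<in> Pow P \<times> Pow Q" "y \<in> Pow P \<times> Pow Q" "(\<lambda>(S,T). S \<union> T) x = (\<lambda>(S,T). S \<union> T) y"
    obtain S T S' T' where xy: "x = (S,T)" "y = (S',T')" by fastforce
    have h: "S \<in> Pow P" "T \<in> Pow Q" "S' \<in> Pow P" "T' \<in> Pow Q" "S \<union> T = S' \<union> T'"
      using hx xy by auto
    have "S = (S \<union> T) \<inter> P" "S' = (S' \<union> T') \<inter> P" "T = (S \<union> T) \<inter> Q" "T' = (S' \<union> T') \<inter> Q"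
      using h(1-4) assms(3) by auto
    thus "x = y" using h(5) xy by metis
  qed
  have "(\<Sum>E\<in>Pow (P \<union> Q). F (E \<inter> P) (E \<inter> Q))
      = (\<Sum>(S,T)\<in>Pow P \<times> Pow Q. F ((S \<union> T) \<inter> P) ((S \<union> T) \<inter> Q))"
    unfolding img by (subst sum.reindex[OF inj]) (simp add: case_prod_beta')
  also have "\<dots> = (\<Sum>(S,T)\<in>Pow P \<times> Pow Q. F S T)"
  proof (rule sum.cong[OF refl])
    fix x assume x: "x \<in> Pow P \<times> Pow Q"
    obtain S T where xST: "x = (S,T)" by fastforce
    have "S \<in> Pow P" "T \<in> Pow Q" using x xST by auto
    then have "(S \<union> T) \<inter> P = S" "(S \<union> T) \<inter> Q = T" using assms(3) by auto
    thus "(case x of (S,T) \<Rightarrow> F ((S \<union> T) \<inter> P) ((S \<union> T) \<inter> Q)) = (case x of (S,T) \<Rightarrow> F S T)" using xST by simp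
  qed
  also have "\<dots> = (\<Sum>S\<in>Pow P. \<Sum>T\<in>Pow Q. F S T)"
    by (rule sum.cartesian_product[symmetric])
  finally show ?thesis .
qed

lemma wmult:
  assumes "finite P" "finite Q" "P \<inter> Q = {}" "S \<subseteq> P" "T \<subseteq> Q"
  shows "w (P \<union> Q) p (S \<union> T) = w P p S * w Q p T"
proof -
  have fS: "finite S" "finite T" using assms(1,2,4,5) finite_subset by blast+
  have "S \<inter> T = {}" using assms(3-5) by blast
  then have cST: "card (S \<union> T) = card S + card T" using fS card_Un_disjoint by blast
  have cPQ: "card (P \<union> Q) = card P + card Q" using assms(1-3) card_Un_disjoint by blast
  have "card S \<le> card P" using card_mono[OF assms(1) assms(4)] .
  have "card T \<le> card Q" using card_mono[OF assms(2) assms(5)] .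
  then have "card (P \<union> Q) - card (S \<union> T) = (card P - card S) + (card Q - card T)"
    using cST cPQ \<open>card S \<le> card P\<close> by linarith
  thus ?thesis unfolding w_def cST by (simp add: power_add)
qed

lemma wsum: "finite P \<Longrightarrow> (\<Sum>E\<in>Pow P. w P p E) = 1"
proof (induction P rule: finite_induct)
  case empty thus ?case by (simp add: w_def)
next
  case (insert x P)
  have eq: "insert x P = {x} \<union> P" by auto
  have "(\<Sum>E\<in>Pow (insert x P). w (insert x P) p E)
      = (\<Sum>E\<in>Pow ({x} \<union> P). w {x} p (E \<inter> {x}) * w P p (E \<inter> P))"
  proof (rule sum.cong)
    fix E assume "E \<in> Pow ({x} \<union> P)"
    then have "E = (E \<inter> {x}) \<union> (E \<inter> P)" by auto
    have d: "{x} \<inter> P = {}" using insert(2) by blast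
    have "w ({x} \<union> P) p ((E \<inter> {x}) \<union> (E \<inter> P)) = w {x} p (E \<inter> {x}) * w P p (E \<inter> P)"
      by (rule wmult[OF _ insert(1) d]) auto
    with \<open>E = (E \<inter> {x}) \<union> (E \<inter> P)\<close> have "w ({x} \<union> P) p E = w {x} p (E \<inter> {x}) * w P p (E \<inter> P)" by simp
    thus "w (insert x P) p E = w {x} p (E \<inter> {x}) * w P p (E \<inter> P)" by simp
  qed simp
  also have "\<dots> = (\<Sum>S\<in>Pow {x}. \<Sum>T\<in>Pow P. w {x} p S * w P p T)"
    by (rule split_sum) (use insert(1,2) in auto)
  also have "\<dots> = (\<Sum>S\<in>Pow {x}. w {x} p S)"
    by (simp add: sum_distrib_left[symmetric] insert.IH)
  also have "\<dots> = 1"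
  proof -
    have "Pow {x} = {{}, {x}}" by blast
    thus ?thesis by (simp add: w_def)
  qed
  finally show ?case .
qed

lemma factor:
  assumes "finite B"
  shows "finite P \<Longrightarrow> (\<forall>b\<in>B. G b \<subseteq> P) \<Longrightarrow> (\<forall>b\<in>B. \<forall>b'\<in>B. b \<noteq> b' \<longrightarrow> G b \<inter> G b' = {}) \<Longrightarrow>
    (\<Sum>E\<in>Pow P. w P p E * (\<Prod>b\<in>B. h b (E \<inter> G b))) = (\<Prod>b\<in>B. \<Sum>S\<in>Pow (G b). w (G b) p S * h b S)"
  using assms
proof (induction B arbitrary: P rule: finite_induct)
  case empty thus ?case by (simp add: wsum)
next
  case (insert b B)
  let ?Q = "P - G b"
  have fG: "finite (G b)" "finite ?Q" using insert.prems(1,2) finite_subset by auto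
  have dis: "G b \<inter> ?Q = {}" by auto
  have Peq: "P = G b \<union> ?Q" using insert.prems(2) by blast
  have "(\<Sum>E\<in>Pow P. w P p E * (\<Prod>b\<in>insert b B. h b (E \<inter> G b)))
     = (\<Sum>E\<in>Pow (G b \<union> ?Q). (w (G b) p (E \<inter> G b) * h b (E \<inter> G b)) *
          (w ?Q p (E \<inter> ?Q) * (\<Prod>b'\<in>B. h b' ((E \<inter> ?Q) \<inter> G b'))))"
  proof (rule sum.cong)
    show "Pow P = Pow (G b \<union> ?Q)" using Peq by metis
  next
    fix E assume "E \<in> Pow (G b \<union> ?Q)"
    then have E: "E \<subseteq> P" using insert.prems(2) by blast
    have wE: "w P p E = w (G b) p (E \<inter> G b) * w ?Q p (E \<inter> ?Q)"
    proof -
      have "E = (E \<inter> G b) \<union> (E \<inter> ?Q)" using E by auto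
      then have "w (G b \<union> ?Q) p E = w (G b) p (E \<inter> G b) * w ?Q p (E \<inter> ?Q)"
        using wmult[OF fG dis, of "E \<inter> G b" "E \<inter> ?Q" p] by auto
      thus ?thesis using Peq by metis
    qed
    have pr: "(\<Prod>b'\<in>B. h b' (E \<inter> G b')) = (\<Prod>b'\<in>B. h b' ((E \<inter> ?Q) \<inter> G b'))"
    proof (rule prod.cong[OF refl])
      fix b' assume "b' \<in> B"
      then have "G b' \<subseteq> P" "G b \<inter> G b' = {}" using insert.prems(2,3) insert(2) by auto
      then have "E \<inter> G b' = (E \<inter> ?Q) \<inter> G b'" by blast
      thus "h b' (E \<inter> G b') = h b' ((E \<inter> ?Q) \<inter> G b')" by simp
    qed
    show "w P p E * (\<Prod>b\<in>insert b B. h b (E \<inter> G b)) =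
      (w (G b) p (E \<inter> G b) * h b (E \<inter> G b)) * (w ?Q p (E \<inter> ?Q) * (\<Prod>b'\<in>B. h b' ((E \<inter> ?Q) \<inter> G b')))"
      unfolding wE pr prod.insert[OF insert(1,2)] by (simp add: mult_ac)
  qed
  also have "\<dots> = (\<Sum>S\<in>Pow (G b). \<Sum>T\<in>Pow ?Q. (w (G b) p S * h b S) * (w ?Q p T * (\<Prod>b'\<in>B. h b' (T \<inter> G b'))))"
    by (rule split_sum[OF fG dis])
  also have "\<dots> = (\<Sum>S\<in>Pow (G b). w (G b) p S * h b S) * (\<Sum>T\<in>Pow ?Q. w ?Q p T * (\<Prod>b'\<in>B. h b' (T \<inter> G b')))"
    by (rule sum_product[symmetric])
  also have "(\<Sum>T\<in>Pow ?Q. w ?Q p T * (\<Prod>b'\<in>B. h b' (T \<inter> G b'))) = (\<Prod>b'\<in>B. \<Sum>S\<in>Pow (G b'). w (G b') p S * h b' S)"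
  proof (rule insert.IH[OF fG(2)])
    show "\<forall>b'\<in>B. G b' \<subseteq> ?Q"
    proof
      fix b' assume "b' \<in> B"
      then have "G b' \<subseteq> P" "G b \<inter> G b' = {}" using insert.prems(2,3) insert(2) by auto
      thus "G b' \<subseteq> ?Q" by blast
    qed
    show "\<forall>b'\<in>B. \<forall>b''\<in>B. b' \<noteq> b'' \<longrightarrow> G b' \<inter> G b'' = {}" using insert.prems(3) by blast
  qed
  finally show ?case unfolding prod.insert[OF insert(1,2)] .
qed

lemma group_val:
  assumes "finite G"
  shows "(\<Sum>S\<in>Pow G. w G p S * (if S = {} then 1 else 1/2)) = (1 + (1-p) ^ card G) / 2"
proof -
  have "(\<Sum>S\<in>Pow G. w G p S * (if S = {} then 1 else 1/2)) = (\<Sum>S\<in>Pow G. w G p S / 2 + (if S = {} then w G p S / 2 else 0))"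
    by (rule sum.cong) auto
  also have "\<dots> = (\<Sum>S\<in>Pow G. w G p S) / 2 + w G p {} / 2"
    using assms by (simp add: sum.distrib sum_divide_distrib[symmetric])
  also have "\<dots> = (1 + (1-p) ^ card G) / 2" using wsum[OF assms] by (simp add: w_def)
  finally show ?thesis .
qed



lemma asym:
  fixes p :: real and n a :: nat
  assumes p: "0 \<le> p" "p \<le> 1" and n: "real n \<ge> 128" and np: "real n ^ 3 * p \<ge> 2048"
    and a: "a = (n div 3) * (n div 3)"
  shows "2 ^ n * ((1 + (1-p) ^ a) / 2) ^ a \<le> (2 * exp (-2)) ^ n"
proof -
  define x where "x = real a"
  have h: "real (n div 3) \<ge> real n / 4"
  proof -
    have "3 * (n div 3) + 2 \<ge> n" by linarith
    then have "3 * real (n div 3) + 2 \<ge> real n" by linarith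
    thus ?thesis using n by linarith
  qed
  have x: "x \<ge> real n ^ 2 / 16"
  proof -
    have "real n / 4 * (real n / 4) \<le> real (n div 3) * real (n div 3)"
      using h n by (intro mult_mono) auto
    thus ?thesis unfolding x_def a by (simp add: power2_eq_square)
  qed
  have x0: "x \<ge> 0" unfolding x_def by simp
  define r where "r = (1-p) ^ a"
  have r0: "r \<ge> 0" unfolding r_def using p by simp
  have bern: "1 + x * p \<le> (1 + p) ^ a" unfolding x_def using Bernoulli_inequality[of p a] p by simp
  have "r * (1 + p) ^ a = (1 - p*p) ^ a" unfolding r_def by (simp add: power_mult_distrib[symmetric] algebra_simps)
  also have "\<dots> \<le> 1" using p by (intro power_le_one) (auto simp: mult_le_one)
  finally have "r * (1 + x*p) \<le> 1" using bern r0 by (meson mult_left_mono order_trans)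
  then have rq: "(1 - r) * (1 + x * p) \<ge> x * p" by (simp add: algebra_simps)
  define q where "q = 1 - r"
  have r1: "r \<le> 1"
  proof -
    have "r * 1 \<le> r * (1 + x*p)" using r0 x0 p by (intro mult_left_mono) auto
    thus ?thesis using \<open>r * (1 + x*p) \<le> 1\<close> by linarith
  qed
  have q0: "q \<ge> 0" using r1 q_def by simp
  have rq': "q * (1 + x*p) \<ge> x * p" using rq q_def by simp
  have xp0: "x * p \<ge> 0" using x0 p by simp
  have qa: "q * x \<ge> 4 * real n"
  proof (cases "x * p \<ge> 1")
    case True
    have True': "1 \<le> p * x" using True by (simp add: mult.commute)
    have "q * (1 + x*p) \<le> q * (2 * (x*p))" using q0 True True' by (intro mult_left_mono) auto
    moreover have "(2*q - 1) * (x*p) = q * (2 * (x*p)) - x*p" by (simp add: algebra_simps)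
    ultimately have "(2*q - 1) * (x*p) \<ge> 0" using rq' by linarith
    then have q2: "2*q - 1 \<ge> 0" using True by (simp add: zero_le_mult_iff)
    have "(2*q - 1) * x \<ge> 0" using q2 x0 by simp
    moreover have "(2*q - 1) * x = 2 * (q*x) - x" by (simp add: algebra_simps)
    ultimately have "q * x \<ge> x / 2" by linarith
    moreover have "x / 2 \<ge> 4 * real n"
    proof -
      have "real n * 8 \<le> real n * (real n / 16)" using n by (intro mult_left_mono) auto
      then have "real n ^ 2 / 16 / 2 \<ge> 4 * real n" by (simp add: power2_eq_square)
      thus ?thesis using x by linarith
    qed
    ultimately show ?thesis by linarith
  next
    case False
    have "q * (1 + x*p) \<le> q * 2" using q0 False by (intro mult_left_mono) auto
    then have "2 * q \<ge> x * p" using rq' by linarith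
    then have "2 * q * x \<ge> x * p * x" using x0 by (simp add: mult_right_mono)
    moreover have "x * p * x \<ge> 8 * real n"
    proof -
      have "x * x \<ge> (real n ^ 2 / 16) * (real n ^ 2 / 16)" using x x0 by (intro mult_mono) auto
      then have "x * x * p \<ge> (real n ^ 2 / 16) * (real n ^ 2 / 16) * p" by (rule mult_right_mono[OF _ p(1)])
      moreover have "(real n ^ 2 / 16) * (real n ^ 2 / 16) * p = real n * (real n ^ 3 * p) / 256"
        by (simp add: power2_eq_square power3_eq_cube)
      moreover have "real n * (real n ^ 3 * p) \<ge> real n * 2048" using np n by (intro mult_left_mono) auto
      moreover have "x * p * x = x * x * p" by (simp add: mult_ac)
      ultimately show ?thesis by linarith
    qed
    ultimately show ?thesis by linarith
  qed
  have "(1 + r) / 2 = 1 - q/2" unfolding q_def by (simp add: field_simps)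
  also have "\<dots> \<le> exp (- (q/2))" using exp_ge_add_one_self[of "-(q/2)"] by simp
  finally have b1: "(1 + r) / 2 \<le> exp (-(q/2))" .
  have "((1 + r) / 2) ^ a \<le> exp (-(q/2)) ^ a" using b1 r0 by (intro power_mono) auto
  also have "\<dots> = exp (-(q * x / 2))" unfolding x_def by (simp add: exp_of_nat_mult[symmetric])
  also have "\<dots> \<le> exp (-(2 * real n))" using qa by simp
  finally have b2: "((1 + r) / 2) ^ a \<le> exp (-(2 * real n))" .
  have "2 ^ n * ((1 + r) / 2) ^ a \<le> 2 ^ n * exp (-(2 * real n))" using b2 by simp
  also have "\<dots> = (2 * exp (-2)) ^ n" by (simp add: power_mult_distrib exp_of_nat_mult[symmetric])
  finally show ?thesis unfolding r_def .
qed



definition ee :: "nat \<Rightarrow> nat \<Rightarrow> complex_vec" where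
  "ee i j = (\<lambda>k. (if k = i then 1 else 0) + (if k = j then 1 else 0))"

definition AA :: "nat \<Rightarrow> complex_vec set" where
  "AA n = (\<lambda>(i,j). ee i j) ` ({..<n div 3} \<times> {n div 3..<2 * (n div 3)})"
definition BB :: "nat \<Rightarrow> complex_vec set" where
  "BB n = (\<lambda>(i,j). ee i j) ` ({..<n div 3} \<times> {2 * (n div 3)..<3 * (n div 3)})"
definition GG :: "nat \<Rightarrow> complex_vec \<Rightarrow> complex_vec set set" where
  "GG n b = (\<lambda>a. {a, b}) ` AA n"

lemma ee_C0: "i < n \<Longrightarrow> j < n \<Longrightarrow> i \<noteq> j \<Longrightarrow> ee i j \<in> C0 n"
proof -
  assume h: "i < n" "j < n" "i \<noteq> j"
  have "(\<Sum>k<n. ee i j k) = (\<Sum>k<n. if k = i then 1 else 0) + (\<Sum>k<n. if k = j then 1 else 0)"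
    unfolding ee_def by (simp add: sum.distrib)
  also have "\<dots> = 2" using h by simp
  finally show ?thesis using h unfolding C0_def by (auto simp: ee_def)
qed

lemma ee_inj:
  assumes "i < h" "h \<le> j" "i' < h" "h \<le> j'" "ee i j = ee i' j'"
  shows "i = i' \<and> j = j'"
proof -
  have "ee i j i \<noteq> 0" "ee i j j \<noteq> 0" by (auto simp: ee_def)
  then have "ee i' j' i \<noteq> 0" "ee i' j' j \<noteq> 0" using assms(5) by auto
  then have "i = i' \<or> i = j'" "j = i' \<or> j = j'" by (auto simp: ee_def split: if_splits)
  thus ?thesis using assms(1-4) by auto
qed

lemma inj_ee: "inj_on (\<lambda>(i,j). ee i j) ({..<h} \<times> {h..<m})"
  by (rule inj_onI) (auto dest: ee_inj)

lemma card_AA: "card (AA n) = (n div 3) * (n div 3)"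
proof -
  have "card (AA n) = card ({..<n div 3} \<times> {n div 3..<2 * (n div 3)})"
    unfolding AA_def by (rule card_image[OF inj_ee])
  thus ?thesis by simp
qed

lemma card_BB: "card (BB n) = (n div 3) * (n div 3)"
proof -
  have "inj_on (\<lambda>(i,j). ee i j) ({..<n div 3} \<times> {2 * (n div 3)..<3 * (n div 3)})"
    by (rule inj_on_subset[OF inj_ee[of "n div 3" "3 * (n div 3)"]]) auto
  then have "card (BB n) = card ({..<n div 3} \<times> {2 * (n div 3)..<3 * (n div 3)})"
    unfolding BB_def by (rule card_image)
  thus ?thesis by simp
qed

lemma AA_C0: "AA n \<subseteq> C0 n"
  unfolding AA_def by (auto intro!: ee_C0)

lemma BB_C0: "BB n \<subseteq> C0 n"
  unfolding BB_def by (auto intro!: ee_C0)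

lemma AB_disj: "AA n \<inter> BB n = {}"
proof -
  { fix i j i' j' assume h: "i < n div 3" "n div 3 \<le> j" "j < 2 * (n div 3)"
      "i' < n div 3" "2 * (n div 3) \<le> j'" "ee i j = ee i' j'"
    have "ee i' j' j' \<noteq> 0" by (simp add: ee_def)
    moreover have "ee i j j' = 0" using h(1-5) by (simp add: ee_def)
    ultimately have False using h(6) by simp }
  thus ?thesis unfolding AA_def BB_def by fastforce
qed

lemma finite_AA: "finite (AA n)" unfolding AA_def by simp
lemma finite_BB: "finite (BB n)" unfolding BB_def by simp

lemma GG_sub: "b \<in> BB n \<Longrightarrow> GG n b \<subseteq> possible_edges n"
proof -
  assume b: "b \<in> BB n"
  show ?thesis
  proof
    fix e assume "e \<in> GG n b"
    then obtain a where a: "a \<in> AA n" "e = {a,b}" unfolding GG_def by blast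
    have "a \<noteq> b" using a b AB_disj by blast
    thus "e \<in> possible_edges n" using a b AA_C0 BB_C0 unfolding possible_edges_def by blast
  qed
qed

lemma card_GG: "b \<in> BB n \<Longrightarrow> card (GG n b) = (n div 3) * (n div 3)"
proof -
  assume b: "b \<in> BB n"
  have "inj_on (\<lambda>a. {a, b}) (AA n)"
  proof (rule inj_onI)
    fix a a' assume "a \<in> AA n" "a' \<in> AA n" "{a,b} = {a',b}"
    moreover have "a \<noteq> b" "a' \<noteq> b" using \<open>a \<in> AA n\<close> \<open>a' \<in> AA n\<close> b AB_disj by blast+
    ultimately show "a = a'" by (auto simp: doubleton_eq_iff)
  qed
  thus ?thesis unfolding GG_def using card_image card_AA by metis
qed

lemma GG_disj: "b \<in> BB n \<Longrightarrow> b' \<in> BB n \<Longrightarrow> b \<noteq> b' \<Longrightarrow> GG n b \<inter> GG n b' = {}"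
proof (rule ccontr)
  assume b: "b \<in> BB n" "b' \<in> BB n" "b \<noteq> b'" "GG n b \<inter> GG n b' \<noteq> {}"
  then obtain a a' where a: "a \<in> AA n" "a' \<in> AA n" "{a,b} = {a',b'}" unfolding GG_def by blast
  then have "b = a'" using b(3) by (auto simp: doubleton_eq_iff)
  thus False using a b AB_disj by blast
qed

lemma GG_hit: "E \<inter> GG n b \<noteq> {} \<longleftrightarrow> (\<exists>a\<in>AA n. {a,b} \<in> E)"
  unfolding GG_def by blast



lemma prob_bound:
  fixes p :: real
  assumes p: "0 \<le> p" "p \<le> 1"
  shows "prob_deficiency_zero n p \<le> 2 ^ n * ((1 + (1-p) ^ ((n div 3) * (n div 3))) / 2) ^ ((n div 3) * (n div 3))"
proof -
  let ?P = "possible_edges n"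
  let ?H = "\<lambda>b S. if S = {} then 1 else (1/2::real)"
  have finP: "finite ?P" by (rule finite_pe)
  have w0: "w ?P p E \<ge> 0" for E using p unfolding w_def by simp
  have "prob_deficiency_zero n p = (\<Sum>E\<in>Pow ?P. if deficiency E = 0 then w ?P p E else 0)"
    unfolding prob_deficiency_zero_def er_prob_def w_def by simp
  also have "\<dots> \<le> (\<Sum>E\<in>Pow ?P. w ?P p E * (2 ^ n * (\<Prod>b\<in>BB n. ?H b (E \<inter> GG n b))))"
  proof (rule sum_mono)
    fix E assume E: "E \<in> Pow ?P"
    have pr: "(\<Prod>b\<in>BB n. ?H b (E \<inter> GG n b)) = (1/2) ^ card {b\<in>BB n. \<exists>a\<in>AA n. {a,b} \<in> E}"
    proof -
      have "(\<Prod>b\<in>BB n. ?H b (E \<inter> GG n b)) = (\<Prod>b\<in>BB n \<inter> - {b. E \<inter> GG n b = {}}. 1/2)"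
        using prod.If_cases[OF finite_BB, of "\<lambda>b. E \<inter> GG n b = {}" "\<lambda>_. 1" "\<lambda>_. 1/2::real"] by simp
      also have "BB n \<inter> - {b. E \<inter> GG n b = {}} = {b\<in>BB n. \<exists>a\<in>AA n. {a,b} \<in> E}"
        using GG_hit by blast
      finally show ?thesis by simp
    qed
    show "(if deficiency E = 0 then w ?P p E else 0) \<le> w ?P p E * (2 ^ n * (\<Prod>b\<in>BB n. ?H b (E \<inter> GG n b)))"
    proof (cases "deficiency E = 0")
      case True
      have "card {b\<in>BB n. \<exists>a\<in>AA n. {a,b} \<in> E} \<le> n"
        using def0_bound[OF _ AB_disj True] E by blast
      then have "(1/2::real) ^ n \<le> (1/2) ^ card {b\<in>BB n. \<exists>a\<in>AA n. {a,b} \<in> E}"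
        by (intro power_decreasing) auto
      then have "1 \<le> 2 ^ n * (\<Prod>b\<in>BB n. ?H b (E \<inter> GG n b))"
        unfolding pr by (simp add: power_one_over field_simps)
      then have "w ?P p E * 1 \<le> w ?P p E * (2 ^ n * (\<Prod>b\<in>BB n. ?H b (E \<inter> GG n b)))"
        using w0 by (intro mult_left_mono) auto
      thus ?thesis using True by simp
    next
      case False
      have "0 \<le> w ?P p E * (2 ^ n * (\<Prod>b\<in>BB n. ?H b (E \<inter> GG n b)))"
        using w0 by (intro mult_nonneg_nonneg prod_nonneg) auto
      thus ?thesis using False by simp
    qed
  qed
  also have "\<dots> = 2 ^ n * (\<Sum>E\<in>Pow ?P. w ?P p E * (\<Prod>b\<in>BB n. ?H b (E \<inter> GG n b)))"
    unfolding sum_distrib_left by (rule sum.cong[OF refl]) (simp only: mult_ac)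
  also have "(\<Sum>E\<in>Pow ?P. w ?P p E * (\<Prod>b\<in>BB n. ?H b (E \<inter> GG n b)))
      = (\<Prod>b\<in>BB n. \<Sum>S\<in>Pow (GG n b). w (GG n b) p S * ?H b S)"
  proof (rule factor[OF finite_BB finP])
    show "\<forall>b\<in>BB n. GG n b \<subseteq> ?P" using GG_sub by blast
    show "\<forall>b\<in>BB n. \<forall>b'\<in>BB n. b \<noteq> b' \<longrightarrow> GG n b \<inter> GG n b' = {}" using GG_disj by blast
  qed
  also have "\<dots> = (\<Prod>b\<in>BB n. (1 + (1-p) ^ ((n div 3) * (n div 3))) / 2)"
  proof (rule prod.cong[OF refl])
    fix b assume b: "b \<in> BB n"
    have "finite (GG n b)" using GG_sub[OF b] finP finite_subset by blast
    thus "(\<Sum>S\<in>Pow (GG n b). w (GG n b) p S * ?H b S) = (1 + (1-p) ^ ((n div 3) * (n div 3))) / 2"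
      using group_val[of "GG n b" p] card_GG[OF b] by simp
  qed
  also have "\<dots> = ((1 + (1-p) ^ ((n div 3) * (n div 3))) / 2) ^ ((n div 3) * (n div 3))"
    by (simp add: card_BB)
  finally show ?thesis by simp
qed

theorem mainTheorem1:
  fixes p :: "nat \<Rightarrow> real"
  assumes "\<And>n. 0 \<le> p n \<and> p n \<le> 1"
    and "filterlim (\<lambda>n. real n ^ 3 * p n) at_top sequentially"
  shows "(\<lambda>n. prob_deficiency_zero n (p n)) \<longlonglongrightarrow> 0"
proof (rule tendsto_sandwich)
  show "\<forall>\<^sub>F n in sequentially. 0 \<le> prob_deficiency_zero n (p n)"
  proof (rule always_eventually, rule allI)
    fix n
    show "0 \<le> prob_deficiency_zero n (p n)"
      unfolding prob_deficiency_zero_def er_prob_def using assms(1)[of n]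
      by (intro sum_nonneg) auto
  qed
  have ev1: "\<forall>\<^sub>F n in sequentially. 2048 \<le> real n ^ 3 * p n"
    using assms(2) by (simp add: filterlim_at_top)
  have ev2: "\<forall>\<^sub>F n in sequentially. 128 \<le> real n"
    by (rule eventually_sequentiallyI[of 128]) simp
  show "\<forall>\<^sub>F n in sequentially. prob_deficiency_zero n (p n) \<le> (2 * exp (-2)) ^ n"
    using ev1 ev2
  proof eventually_elim
    case (elim n)
    have p: "0 \<le> p n" "p n \<le> 1" using assms(1)[of n] by auto
    show ?case using prob_bound[OF p, of n] asym[OF p elim(2) elim(1) refl] by linarith
  qed
  show "(\<lambda>_. 0) \<longlonglongrightarrow> (0::real)" by simp
  have "2 * exp (-2::real) < 1"
  proof -
    have "1 + 2 \<le> exp (2::real)" using exp_ge_add_one_self[of 2] by simp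
    then have "2 < exp (2::real)" by linarith
    thus ?thesis by (simp add: exp_minus field_simps)
  qed
  then show "(\<lambda>n. (2 * exp (-2::real)) ^ n) \<longlonglongrightarrow> 0"
    by (intro LIMSEQ_power_zero) simp
qed


end
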